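(* Let $q$ be a prime power, $m\ge 1$, and let $L=\{\alpha_1,\dots,\alpha_n\}\subseteq GF(q^m)\setminus\{0\}$. Then the $q$-ary Goppa code $\Gamma(L,G)$ with $G(x)=x^{q}$ is equivalent to the $q$-ary Goppa code $\Gamma(L,G^{*})$ with $G^{*}(x)=x^{q-1}$.
   Context: For a set $L=\{\alpha_1,\dots,\alpha_n\}$ of distinct elements of $GF(q^m)$ and a polynomial $G\in GF(q^m)[x]$ with $G(\alpha_k)\neq 0$ for all $k$, the $q$-ary Goppa code is $\Gamma(L,G)=\{c\in GF(q)^n:\ \sum_{k=1}^n \frac{c_k}{x-\alpha_k}\equiv 0 \pmod{G(x)}\}$; equivalently, $c\in GF(q)^n$ lies in $\Gamma(L,G)$ iff $\sum_k c_k\,\alpha_k^s/G(\alpha_k)=0$ for $s=0,1,\dots,\deg G-1$. Two codes of length $n$ are equivalent if one is obtained from the other by a permutation of coordinates. *)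

theory Defs
  imports "HOL-Computational_Algebra.Polynomial" "HOL-Computational_Algebra.Primes" "HOL-Combinatorics.Permutations"
begin

definition is_subfield :: "'a::field set \<Rightarrow> bool" where
  "is_subfield K \<longleftrightarrow> 0 \<in> K \<and> 1 \<in> K \<and>
     (\<forall>x\<in>K. \<forall>y\<in>K. x + y \<in> K \<and> x * y \<in> K) \<and>
     (\<forall>x\<in>K. - x \<in> K) \<and> (\<forall>x\<in>K. x \<noteq> 0 \<longrightarrow> inverse x \<in> K)"

definition prime_power :: "nat \<Rightarrow> bool" where
  "prime_power q \<longleftrightarrow> (\<exists>p k. prime p \<and> k \<ge> 1 \<and> q = p ^ k)"

definition goppa_code :: "'a::field set \<Rightarrow> 'a list \<Rightarrow> 'a poly \<Rightarrow> 'a list set" where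
  "goppa_code K L G = {c. length c = length L \<and> set c \<subseteq> K \<and>
     (\<forall>s < degree G. (\<Sum>k < length L. c ! k * (L ! k) ^ s / poly G (L ! k)) = 0)}"

definition codes_equivalent :: "nat \<Rightarrow> 'a list set \<Rightarrow> 'a list set \<Rightarrow> bool" where
  "codes_equivalent n C1 C2 \<longleftrightarrow> (\<exists>\<sigma>::nat \<Rightarrow> nat. \<sigma> permutes {..<n} \<and>
     C2 = (\<lambda>c. map (\<lambda>i. c ! \<sigma> i) [0..<n]) ` C1)"

end

theory Submission
  imports Defs
begin

lemma subfield_pow_card:
  fixes K :: "'a::{field,finite} set"
  assumes sf: "is_subfield K" and cK: "card K = q" and x: "x \<in> K"
  shows "x ^ q = x"
proof (cases "x = 0")
  case True
  have "0 \<in> K" "1 \<in> K" using sf unfolding is_subfield_def by auto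
  hence "card {0::'a,1} \<le> card K" by (intro card_mono) auto
  hence "q \<ge> 2" using cK by simp
  thus ?thesis using True by simp
next
  case False
  have fin: "finite (K - {0})" by simp
  have mulK: "\<And>y. y \<in> K \<Longrightarrow> x * y \<in> K" using sf x unfolding is_subfield_def by auto
  have invK: "inverse x \<in> K" using sf x False unfolding is_subfield_def by auto
  have mulK2: "\<And>y. y \<in> K \<Longrightarrow> inverse x * y \<in> K" using sf invK unfolding is_subfield_def by auto
  have "(\<Prod>y\<in>K-{0}. x * y) = (\<Prod>y\<in>K-{0}. y)"
    by (rule prod.reindex_bij_witness[of _ "\<lambda>y. inverse x * y" "\<lambda>y. x * y"])
       (use False mulK mulK2 in \<open>auto simp: field_simps\<close>)
  moreover have "(\<Prod>y\<in>K-{0}. x * y) = x ^ card (K - {0}) * (\<Prod>y\<in>K-{0}. y)"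
    by (simp add: prod.distrib)
  moreover have "(\<Prod>y\<in>K-{0}. y) \<noteq> 0" by simp
  ultimately have "x ^ card (K - {0}) = 1" by simp
  moreover have "card (K - {0}) = q - 1" using cK x sf by (simp add: card_Diff_singleton_if is_subfield_def)
  moreover have "q \<ge> 1" using cK x by (metis card_0_eq empty_iff finite less_one not_le)
  ultimately show ?thesis by (metis power_Suc Suc_diff_1 mult_1_right le_less_trans zero_less_one less_le_trans
      le_numeral_extra(4) mult.commute linorder_not_le not_one_le_zero)
qed

theorem lemma1:
  fixes K :: "'a::{field,finite} set" and L :: "'a list" and q m :: nat
  assumes "prime_power q" and "m \<ge> 1"
    and "card (UNIV :: 'a set) = q ^ m"
    and "is_subfield K" and "card K = q"
    and "distinct L" and "0 \<notin> set L"
  shows "codes_equivalent (length L) (goppa_code K L (monom 1 q))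
                                     (goppa_code K L (monom 1 (q - 1)))"
proof -
  obtain p k where p: "prime p" "k \<ge> 1" "q = p ^ k"
    using assms(1) unfolding prime_power_def by blast
  have q2: "q \<ge> 2"
  proof -
    have "p \<ge> 2" using p(1) prime_ge_2_nat by blast
    moreover have "p \<le> p ^ k" using p(2) \<open>p \<ge> 2\<close> by (simp add: self_le_power)
    ultimately show ?thesis using p(3) by simp
  qed
  have finU: "finite (UNIV :: 'a set)" by simp
  have cpos: "CHAR('a) > 0" by (rule finite_imp_CHAR_pos[OF finU])
  have cprime: "prime CHAR('a)" using prime_CHAR_semidom[OF cpos] .
  have "of_nat (card (UNIV :: 'a set)) = (0::'a)"
  proof -
    have "(\<Sum>y\<in>(UNIV::'a set). y + 1) = (\<Sum>y\<in>UNIV. y)"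
      by (rule sum.reindex_bij_witness[of _ "\<lambda>y. y - 1" "\<lambda>y. y + 1"]) auto
    thus ?thesis by (simp add: sum.distrib)
  qed
  hence "CHAR('a) dvd card (UNIV :: 'a set)" using of_nat_eq_0_iff_char_dvd by blast
  hence "CHAR('a) dvd p ^ (k * m)" using assms(3) p(3) by (metis power_mult)
  hence "CHAR('a) dvd p" using cprime prime_dvd_power by blast
  hence cp: "CHAR('a) = p" using cprime p(1) by (metis primes_dvd_imp_eq)
  have frob: "\<And>(f::nat \<Rightarrow> 'a) A. sum f A ^ q = sum (\<lambda>i. f i ^ q) A"
    using freshmans_dream_sum'[OF cprime, of q k] cp p by simp
  have Kq: "\<And>x. x \<in> K \<Longrightarrow> x ^ q = x"
    using subfield_pow_card[OF assms(4) assms(5)] .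
  define n where "n = length L"
  have nz: "\<And>k. k < n \<Longrightarrow> L ! k \<noteq> 0" using assms(7) unfolding n_def
    by (metis nth_mem)
  have eq: "goppa_code K L (monom 1 q) = goppa_code K L (monom 1 (q - 1))"
  proof (intro set_eqI iffI)
    fix c assume c: "c \<in> goppa_code K L (monom 1 q)"
    have len: "length c = n" and sK: "set c \<subseteq> K"
      and H: "\<And>s. s < q \<Longrightarrow> (\<Sum>k<n. c ! k * (L ! k) ^ s / (L ! k) ^ q) = 0"
      using c by (auto simp: goppa_code_def n_def degree_monom_eq poly_monom)
    show "c \<in> goppa_code K L (monom 1 (q - 1))"
      unfolding goppa_code_def
    proof (intro CollectI conjI allI impI)
      fix s assume s: "s < degree (monom (1::'a) (q - 1))"
      hence s': "s + 1 < q" using q2 by (simp add: degree_monom_eq)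
      have "(\<Sum>k<length L. c ! k * L ! k ^ s / poly (monom 1 (q - 1)) (L ! k))
          = (\<Sum>k<n. c ! k * (L ! k) ^ (s+1) / (L ! k) ^ q)"
      proof (rule sum.cong)
        fix k assume "k \<in> {..<n}"
        hence a: "L ! k \<noteq> 0" using nz by auto
        have "q = Suc (q - 1)" using q2 by simp
        hence "(L ! k) ^ q = L ! k * (L ! k) ^ (q - 1)" by (metis power_Suc)
        thus "c ! k * L ! k ^ s / poly (monom 1 (q - 1)) (L ! k) = c ! k * (L ! k) ^ (s+1) / (L ! k) ^ q"
          using a by (simp add: poly_monom)
      qed (simp add: n_def)
      also have "\<dots> = 0" using H[OF s'] .
      finally show "(\<Sum>k<length L. c ! k * L ! k ^ s / poly (monom 1 (q - 1)) (L ! k)) = 0" .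
    qed (use len sK n_def in auto)
  next
    fix c assume c: "c \<in> goppa_code K L (monom 1 (q - 1))"
    have len: "length c = n" and sK: "set c \<subseteq> K"
      and H: "\<And>s. s < q - 1 \<Longrightarrow> (\<Sum>k<n. c ! k * (L ! k) ^ s / (L ! k) ^ (q - 1)) = 0"
      using c q2 by (auto simp: goppa_code_def n_def degree_monom_eq poly_monom)
    have H': "\<And>s. s < q \<Longrightarrow> s \<ge> 1 \<Longrightarrow> (\<Sum>k<n. c ! k * (L ! k) ^ s / (L ! k) ^ q) = 0"
    proof -
      fix s assume s: "s < q" "s \<ge> 1"
      have "(\<Sum>k<n. c ! k * (L ! k) ^ s / (L ! k) ^ q) = (\<Sum>k<n. c ! k * (L ! k) ^ (s - 1) / (L ! k) ^ (q - 1))"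
      proof (rule sum.cong)
        fix k assume "k \<in> {..<n}"
        hence a: "L ! k \<noteq> 0" using nz by auto
        have "q = Suc (q - 1)" using q2 by simp
        hence e1: "(L ! k) ^ q = L ! k * (L ! k) ^ (q - 1)" by (metis power_Suc)
        have "s = Suc (s - 1)" using s by simp
        hence e2: "(L ! k) ^ s = L ! k * (L ! k) ^ (s - 1)" by (metis power_Suc)
        show "c ! k * (L ! k) ^ s / (L ! k) ^ q = c ! k * (L ! k) ^ (s - 1) / (L ! k) ^ (q - 1)"
          unfolding e1 e2 using a by simp
      qed simp
      also have "\<dots> = 0" using H s by simp
      finally show "(\<Sum>k<n. c ! k * (L ! k) ^ s / (L ! k) ^ q) = 0" .
    qed
    have H0: "(\<Sum>k<n. c ! k * (L ! k) ^ 0 / (L ! k) ^ q) = 0"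
    proof -
      have "(\<Sum>k<n. c ! k / L ! k) = (\<Sum>k<n. c ! k * (L ! k) ^ (q - 2) / (L ! k) ^ (q - 1))"
      proof (rule sum.cong)
        fix k assume "k \<in> {..<n}"
        hence a: "L ! k \<noteq> 0" using nz by auto
        have "q - 1 = Suc (q - 2)" using q2 by simp
        hence e1: "(L ! k) ^ (q - 1) = L ! k * (L ! k) ^ (q - 2)" by (metis power_Suc)
        show "c ! k / L ! k = c ! k * (L ! k) ^ (q - 2) / (L ! k) ^ (q - 1)"
          unfolding e1 using a by simp
      qed simp
      also have "\<dots> = 0" using H q2 by simp
      finally have z: "(\<Sum>k<n. c ! k / L ! k) = 0" .
      have "(\<Sum>k<n. c ! k * (L ! k) ^ 0 / (L ! k) ^ q) = (\<Sum>k<n. (c ! k / L ! k) ^ q)"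
      proof (rule sum.cong)
        fix k assume "k \<in> {..<n}"
        hence "c ! k \<in> K" using sK len by (metis lessThan_iff nth_mem subsetD)
        hence "c ! k ^ q = c ! k" using Kq by blast
        thus "c ! k * (L ! k) ^ 0 / (L ! k) ^ q = (c ! k / L ! k) ^ q"
          by (simp add: power_divide)
      qed simp
      also have "\<dots> = (\<Sum>k<n. c ! k / L ! k) ^ q" using frob by simp
      also have "\<dots> = 0" using z q2 by simp
      finally show ?thesis .
    qed
    show "c \<in> goppa_code K L (monom 1 q)"
      unfolding goppa_code_def
    proof (intro CollectI conjI allI impI)
      fix s assume s: "s < degree (monom (1::'a) q)"
      hence s': "s < q" by (simp add: degree_monom_eq)
      have "(\<Sum>k<length L. c ! k * L ! k ^ s / poly (monom 1 q) (L ! k))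
          = (\<Sum>k<n. c ! k * (L ! k) ^ s / (L ! k) ^ q)"
        by (simp add: poly_monom n_def)
      also have "\<dots> = 0"
        using H' H0 s' by (cases "s = 0") auto
      finally show "(\<Sum>k<length L. c ! k * L ! k ^ s / poly (monom 1 q) (L ! k)) = 0" .
    qed (use len sK n_def in auto)
  qed
  have img: "(\<lambda>c. map (\<lambda>i. c ! id i) [0..<length L]) ` goppa_code K L (monom 1 q)
      = goppa_code K L (monom 1 q)"
  proof -
    have "\<And>c. c \<in> goppa_code K L (monom 1 q) \<Longrightarrow> map (\<lambda>i. c ! id i) [0..<length L] = c"
    proof -
      fix c assume "c \<in> goppa_code K L (monom 1 q)"
      hence "length c = length L" by (simp add: goppa_code_def)
      hence "map (\<lambda>i. c ! id i) [0..<length L] = map (\<lambda>i. c ! i) [0..<length c]" by simp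
      also have "\<dots> = c" by (rule map_nth)
      finally show "map (\<lambda>i. c ! id i) [0..<length L] = c" .
    qed
    thus ?thesis by (simp add: image_cong)
  qed
  show ?thesis unfolding codes_equivalent_def
    apply (rule exI[of _ id])
    apply (rule conjI[OF permutes_id])
    apply (subst img)
    apply (rule eq[symmetric])
    done
qed

end
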